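(* Let $r\in(0,1)$, $b\in(-1,1)$, $\lambda(r)=\ln\frac{1+r}{1-r}$ and $a=\tan\frac{b\pi}{4}$. Let $\overline{S}_{\lambda(r)}(b)=\{z\in\mathbb{S}: d_{\mathbb{S}}(z,b)\leqslant\lambda(r)\}$. Then $$\{\operatorname{Re} z: z\in\overline{S}_{\lambda(r)}(b)\}=[m_b(r),M_b(r)],$$ where $m_b(r)=\frac{4}{\pi}\arctan\frac{a-r}{1-ar}$ and $M_b(r)=\frac{4}{\pi}\arctan\frac{a+r}{1+ar}$.
   Context: $\mathbb{S}=\{z\in\mathbb{C}:-1<\operatorname{Re} z<1\}$. The hyperbolic density of $\mathbb{S}$ is $\rho_{\mathbb{S}}(z)=\frac{\pi}{2}\big/\cos\left(\frac{\pi}{2}\operatorname{Re} z\right)$ and $d_{\mathbb{S}}(z_1,z_2)=\inf_\gamma\int_\gamma\rho_{\mathbb{S}}(z)|dz|$ over $C^1$ curves $\gamma$ in $\mathbb{S}$ joining $z_1$ to $z_2$. *)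

theory Defs
  imports "HOL-Analysis.Analysis"
begin

definition strip :: "complex set" where
  "strip = {z. -1 < Re z \<and> Re z < 1}"

definition rho_S :: "complex \<Rightarrow> real" where
  "rho_S z = (pi / 2) / cos (pi / 2 * Re z)"

definition hyp_length :: "(real \<Rightarrow> complex) \<Rightarrow> real" where
  "hyp_length g = integral {0..1} (\<lambda>t. rho_S (g t) * norm (vector_derivative g (at t within {0..1})))"

definition strip_curves :: "complex \<Rightarrow> complex \<Rightarrow> (real \<Rightarrow> complex) set" where
  "strip_curves z1 z2 = {g. g C1_differentiable_on {0..1} \<and> g ` {0..1} \<subseteq> strip
                            \<and> g 0 = z1 \<and> g 1 = z2}"

definition d_S :: "complex \<Rightarrow> complex \<Rightarrow> real" where
  "d_S z1 z2 = (INF g \<in> strip_curves z1 z2. hyp_length g)"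

end

theory Submission
  imports Defs
begin
definition FF :: "real \<Rightarrow> real" where
  "FF x = ln (1 + tan (pi*x/4)) - ln (1 - tan (pi*x/4))"

lemma pi_lt: "-1 < (x::real) \<Longrightarrow> -pi < pi*x" "x < 1 \<Longrightarrow> pi*x < pi"
proof -
  show "-1 < (x::real) \<Longrightarrow> -pi < pi*x" using mult_strict_left_mono[of "-1" x pi] by simp
  show "x < 1 \<Longrightarrow> pi*x < pi" using mult_strict_left_mono[of x 1 pi] by simp
qed

lemma tan_bnd: assumes "-1 < x" "x < 1" shows "-1 < tan (pi*x/4)" "tan (pi*x/4) < 1"
proof -
  have "tan (-(pi/4)) < tan (pi*x/4)"
    using pi_gt_zero pi_lt(1)[OF assms(1)] pi_lt(2)[OF assms(2)] by (intro tan_monotone) linarith+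
  then show "-1 < tan (pi*x/4)" by (simp add: tan_minus tan_45)
  have "tan (pi*x/4) < tan (pi/4)"
    using pi_gt_zero pi_lt(1)[OF assms(1)] pi_lt(2)[OF assms(2)] by (intro tan_monotone) linarith+
  then show "tan (pi*x/4) < 1" by (simp add: tan_45)
qed

lemma cos_pos: assumes "-1 < x" "x < 1" shows "cos (pi/2*x) > 0"
  using pi_gt_zero pi_lt(1)[OF assms(1)] pi_lt(2)[OF assms(2)] by (intro cos_gt_zero_pi) (simp_all add: field_simps)

lemma alg_aux: "(c::real) \<noteq> 0 \<Longrightarrow> u \<noteq> 0 \<Longrightarrow> c/u * (inverse (c^2) * (p/4)) = p/(4*c) * (1/u)"
  by (simp add: field_simps power2_eq_square)

lemma alg_id:
  fixes c s p :: real
  assumes "c \<noteq> 0" "c + s \<noteq> 0" "c - s \<noteq> 0"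
  shows "1/(1 + s/c) * (inverse (c^2) * (p/4)) - 1/(1 - s/c) * (-(inverse (c^2) * (p/4))) = (p/2)/(c^2 - s^2)"
proof -
  have a: "1/(1 + s/c) = c/(c+s)" "1/(1 - s/c) = c/(c-s)" using assms by (simp_all add: field_simps)
  have b: "c^2 - s^2 = (c+s)*(c-s)" by (simp add: power2_eq_square algebra_simps)
  have e4: "c*4 + s*4 \<noteq> 0" "c*4 - s*4 \<noteq> 0" "c \<noteq> s" using assms by auto
  have c1: "c/(c+s) * (inverse (c^2) * (p/4)) = p/(4*c) * (1/(c+s))" using assms by (intro alg_aux) auto
  have c2: "c/(c-s) * (inverse (c^2) * (p/4)) = p/(4*c) * (1/(c-s))" using assms by (intro alg_aux) auto
  have c3: "1/(c+s) + 1/(c-s) = 2*c/((c+s)*(c-s))" using assms by (simp add: field_simps)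
  have "1/(1 + s/c) * (inverse (c^2) * (p/4)) - 1/(1 - s/c) * (-(inverse (c^2) * (p/4))) = p/(4*c) * (1/(c+s) + 1/(c-s))"
    unfolding a using c1 c2 by (simp add: distrib_left)
  also have "\<dots> = (p/2)/((c+s)*(c-s))" unfolding c3 using assms by simp
  finally show ?thesis unfolding b .
qed

lemma FF_deriv: assumes "-1 < x" "x < 1"
  shows "(FF has_real_derivative (pi/2) / cos (pi/2*x)) (at x)"
proof -
  let ?t = "pi*x/4"
  have c: "cos ?t \<noteq> 0" using cos_pos[of "x/2"] assms by (auto simp: field_simps)
  note tb = tan_bnd[OF assms]
  have cd: "cos (pi/2*x) = (cos ?t)^2 - (sin ?t)^2" 
    using cos_double[of ?t] by (simp add: field_simps)
  have cp: "cos (pi/2*x) > 0" using cos_pos assms by blast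
  have "1 + tan ?t \<noteq> 0" "1 - tan ?t \<noteq> 0" using tb by auto
  then have a1: "cos ?t + sin ?t \<noteq> 0" "cos ?t - sin ?t \<noteq> 0" using c by (auto simp: tan_def field_simps)
  define D where "D = inverse ((cos ?t)^2) * (pi/4)"
  have dt: "((\<lambda>z. tan (pi*z/4)) has_real_derivative D) (at x)"
    unfolding D_def
    apply (rule DERIV_chain2[of tan "inverse ((cos ?t)^2)" "\<lambda>z. pi*z/4" x "pi/4" UNIV, OF DERIV_tan[OF c]])
    by (auto intro!: derivative_eq_intros)
  have d1: "((\<lambda>z. 1 + tan (pi*z/4)) has_real_derivative D) (at x)"
    using DERIV_add[OF DERIV_const dt] by simp
  have d2: "((\<lambda>z. 1 - tan (pi*z/4)) has_real_derivative -D) (at x)"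
    using DERIV_diff[OF DERIV_const dt] by simp
  have l1: "((\<lambda>z. ln (1 + tan (pi*z/4))) has_real_derivative 1/(1 + tan ?t) * D) (at x)"
    using DERIV_chain2[of ln "1/(1 + tan ?t)" "\<lambda>z. 1 + tan (pi*z/4)" x D UNIV] DERIV_ln_divide d1 tb by simp
  have l2: "((\<lambda>z. ln (1 - tan (pi*z/4))) has_real_derivative 1/(1 - tan ?t) * (-D)) (at x)"
    using DERIV_chain2[of ln "1/(1 - tan ?t)" "\<lambda>z. 1 - tan (pi*z/4)" x "-D" UNIV] DERIV_ln_divide d2 tb by simp
  have e: "1/(1 + tan ?t) * D - 1/(1 - tan ?t) * (-D) = (pi/2) / cos (pi/2*x)"
    unfolding cd tan_def D_def using alg_id[OF c a1] .
  show ?thesis unfolding FF_def[abs_def] using DERIV_diff[OF l1 l2] e by simp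
qed

lemma FF_mono: assumes "-1 < x" "x < y" "y < 1" shows "FF x < FF y"
proof -
  have t: "tan (pi*x/4) < tan (pi*y/4)"
    using pi_gt_zero pi_lt(1)[OF assms(1)] pi_lt(2)[OF assms(3)] mult_strict_left_mono[OF assms(2) pi_gt_zero]
    by (intro tan_monotone) linarith+
  have b1: "-1 < tan (pi*x/4)" "tan (pi*y/4) < 1" using tan_bnd assms by auto
  have "ln (1 + tan (pi*x/4)) < ln (1 + tan (pi*y/4))" using t b1 by simp
  moreover have "ln (1 - tan (pi*y/4)) < ln (1 - tan (pi*x/4))" using t b1 by simp
  ultimately show ?thesis unfolding FF_def by simp
qed

lemma FF_mono_le: assumes "-1 < x" "x < 1" "-1 < y" "y < 1" shows "FF x \<le> FF y \<longleftrightarrow> x \<le> y"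
  using FF_mono assms by (metis linorder_not_le order_less_imp_le order_less_le)

lemma arct_in: assumes "-1 < u" "u < 1" shows "-1 < 4/pi*arctan u" "4/pi*arctan u < 1"
proof -
  have "arctan (-1) < arctan u" "arctan u < arctan 1" using assms arctan_less_iff by blast+
  then have "-(pi/4) < arctan u" "arctan u < pi/4" by (simp_all add: arctan_one arctan_minus)
  then show "-1 < 4/pi*arctan u" "4/pi*arctan u < 1" using pi_gt_zero by (simp_all add: field_simps)
qed

lemma FF_arct: "FF (4/pi*arctan u) = ln (1 + u) - ln (1 - u)"
  unfolding FF_def by (simp add: tan_arctan)

lemma line_curve: assumes "z \<in> strip" "w \<in> strip"
  shows "(\<lambda>t. z + of_real t * (w - z)) \<in> strip_curves z w"
    and "\<And>t. ((\<lambda>t. z + of_real t * (w - z)) has_vector_derivative (w - z)) (at t)"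
proof -
  show d: "\<And>t. ((\<lambda>t. z + of_real t * (w - z)) has_vector_derivative (w - z)) (at t)"
    by (auto intro!: derivative_eq_intros simp: has_vector_derivative_def scaleR_conv_of_real)
  have "(\<lambda>t. z + of_real t * (w - z)) C1_differentiable_on {0..1}"
    unfolding C1_differentiable_on_def using d by (intro exI[of _ "\<lambda>_. w - z"]) auto
  moreover have "(\<lambda>t. z + of_real t * (w - z)) ` {0..1} \<subseteq> strip"
  proof
    fix y assume "y \<in> (\<lambda>t. z + of_real t * (w - z)) ` {0..1}"
    then obtain t where t: "0 \<le> t" "t \<le> 1" "y = z + of_real t * (w - z)" by auto
    have "Re y = Re z + t * (Re w - Re z)" unfolding t(3) by simp
    then have re: "Re y = (1 - t) * Re z + t * Re w" by (simp add: algebra_simps)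
    have z: "-1 < Re z" "Re z < 1" and w: "-1 < Re w" "Re w < 1" using assms by (auto simp: strip_def)
    have "(1 - t) * (-1) \<le> (1 - t) * Re z" "t * (-1) \<le> t * Re w" using t z w by (intro mult_left_mono; simp)+
    moreover have "(1 - t) * Re z \<le> (1 - t) * 1" "t * Re w \<le> t * 1" using t z w by (intro mult_left_mono; simp)+
    moreover have "(1 - t) * (-1) < (1 - t) * Re z \<or> t * (-1) < t * Re w"
      using t z w mult_strict_left_mono[of "-1" "Re z" "1 - t"] by (cases "t = 1") auto
    moreover have "(1 - t) * Re z < (1 - t) * 1 \<or> t * Re w < t * 1"
      using t z w mult_strict_left_mono[of "Re z" 1 "1 - t"] by (cases "t = 1") auto
    ultimately show "y \<in> strip" unfolding strip_def using re by auto
  qed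
  ultimately show "(\<lambda>t. z + of_real t * (w - z)) \<in> strip_curves z w"
    unfolding strip_curves_def by auto
qed


lemma strip_cos_pos: "z \<in> strip \<Longrightarrow> cos (pi/2 * Re z) > 0"
  using cos_pos by (auto simp: strip_def)

lemma curve_bound:
  assumes g: "g \<in> strip_curves z w"
  shows "\<bar>FF (Re w) - FF (Re z)\<bar> \<le> hyp_length g"
proof -
  from g have c1: "g C1_differentiable_on {0..1}" and im: "g ` {0..1} \<subseteq> strip"
    and g0: "g 0 = z" and g1: "g 1 = w" by (auto simp: strip_curves_def)
  from c1 obtain D where D: "\<And>t. t \<in> {0..1} \<Longrightarrow> (g has_vector_derivative D t) (at t)"
    and Dc: "continuous_on {0..1} D" unfolding C1_differentiable_on_def by blast
  have gc: "continuous_on {0..1} g" using C1_differentiable_imp_continuous_on[OF c1] .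
  have vd: "vector_derivative g (at t within {0..1}) = D t" if "t \<in> {0..1}" for t
    using vector_derivative_within_cbox[of 0 1 t g "D t"] D[OF that] that
    by (simp add: has_vector_derivative_at_within)
  have gs: "g t \<in> strip" if "t \<in> {0..1}" for t using im that by auto
  have cp: "cos (pi/2 * Re (g t)) > 0" if "t \<in> {0..1}" for t using strip_cos_pos gs that by blast
  define h' where "h' t = rho_S (g t) * Re (D t)" for t
  define k where "k t = rho_S (g t) * norm (D t)" for t
  have hd: "((\<lambda>t. FF (Re (g t))) has_vector_derivative h' t) (at t within {0..1})" if t: "t \<in> {0..1}" for t
  proof -
    have r: "-1 < Re (g t)" "Re (g t) < 1" using gs[OF t] by (auto simp: strip_def)
    have "((\<lambda>t. Re (g t)) has_real_derivative Re (D t)) (at t within {0..1})"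
      using has_field_derivative_Re[OF has_vector_derivative_at_within[OF D[OF t]]] .
    from DERIV_chain2[of FF _ "\<lambda>t. Re (g t)", OF FF_deriv[OF r] this]
    show ?thesis unfolding h'_def rho_S_def has_real_derivative_iff_has_vector_derivative .
  qed
  have ftc: "(h' has_integral (FF (Re w) - FF (Re z))) {0..1}"
    using fundamental_theorem_of_calculus[of 0 1 "\<lambda>t. FF (Re (g t))" h'] hd g0 g1 by simp
  have kc: "continuous_on {0..1} k"
  proof -
    have cp': "\<forall>t\<in>{0..1}. cos (pi/2 * Re (g t)) \<noteq> 0" using cp by (metis less_irrefl)
    show ?thesis unfolding k_def rho_S_def
      by (intro continuous_intros gc Dc cp')
  qed
  have ki: "k integrable_on {0..1}" using integrable_continuous_real[OF kc] by simp
  have bnd: "norm (h' t) \<le> k t" if t: "t \<in> {0..1}" for t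
  proof -
    have "rho_S (g t) > 0" unfolding rho_S_def using cp[OF t] by simp
    then show ?thesis unfolding h'_def k_def
      by (simp add: abs_mult abs_Re_le_cmod mult_left_mono)
  qed
  have "norm (integral {0..1} h') \<le> integral {0..1} k"
    by (rule integral_norm_bound_integral[OF _ ki bnd]) (use ftc in auto)
  moreover have "integral {0..1} h' = FF (Re w) - FF (Re z)" using ftc by (rule integral_unique)
  moreover have "hyp_length g = integral {0..1} k"
    unfolding hyp_length_def k_def by (rule integral_cong) (simp add: vd)
  ultimately show ?thesis by simp
qed


lemma dS_lower: assumes "z \<in> strip" "w \<in> strip"
  shows "\<bar>FF (Re w) - FF (Re z)\<bar> \<le> d_S z w"
  unfolding d_S_def
proof (rule cINF_greatest)
  show "strip_curves z w \<noteq> {}" using line_curve(1)[OF assms] by blast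
  show "\<And>g. g \<in> strip_curves z w \<Longrightarrow> \<bar>FF (Re w) - FF (Re z)\<bar> \<le> hyp_length g"
    by (rule curve_bound)
qed

lemma dS_upper: assumes "-1 < x" "x < 1" "-1 < y" "y < 1"
  shows "d_S (of_real x) (of_real y) \<le> \<bar>FF y - FF x\<bar>"
proof -
  have zs: "of_real x \<in> strip" "of_real y \<in> strip" using assms by (auto simp: strip_def)
  define g where "g = (\<lambda>t. (of_real x::complex) + of_real t * (of_real y - of_real x))"
  have gc: "g \<in> strip_curves (of_real x) (of_real y)" unfolding g_def by (rule line_curve(1)[OF zs])
  have gd: "\<And>t. (g has_vector_derivative (of_real y - of_real x)) (at t)" unfolding g_def by (rule line_curve(2)[OF zs])
  have vd: "vector_derivative g (at t within {0..1}) = of_real y - of_real x" if "t \<in> {0..1}" for t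
    using vector_derivative_within_cbox[of 0 1 t g] gd[of t] that
    by (simp add: has_vector_derivative_at_within)
  have reg: "Re (g t) = x + t * (y - x)" for t unfolding g_def by simp
  have gs: "g t \<in> strip" if "t \<in> {0..1}" for t using gc that by (auto simp: strip_curves_def)
  define h' where "h' t = rho_S (g t) * (y - x)" for t
  have hd: "((\<lambda>t. FF (Re (g t))) has_vector_derivative h' t) (at t within {0..1})" if t: "t \<in> {0..1}" for t
  proof -
    have r: "-1 < Re (g t)" "Re (g t) < 1" using gs[OF t] by (auto simp: strip_def)
    have "((\<lambda>t. Re (g t)) has_real_derivative Re (of_real y - of_real x)) (at t within {0..1})"
      using has_field_derivative_Re[OF has_vector_derivative_at_within[OF gd]] .
    from DERIV_chain2[of FF _ "\<lambda>t. Re (g t)", OF FF_deriv[OF r] this]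
    show ?thesis unfolding h'_def rho_S_def has_real_derivative_iff_has_vector_derivative by simp
  qed
  have ftc: "(h' has_integral (FF y - FF x)) {0..1}"
    using fundamental_theorem_of_calculus[of 0 1 "\<lambda>t. FF (Re (g t))" h'] hd reg by simp
  define c :: real where "c = (if x \<le> y then 1 else -1)"
  have hl: "hyp_length g = integral {0..1} (\<lambda>t. c * h' t)"
    unfolding hyp_length_def h'_def c_def
    by (rule integral_cong) (auto simp: vd norm_of_real[of "y - x", unfolded of_real_diff])
  also have "\<dots> = c * (FF y - FF x)" using has_integral_mult_right[OF ftc, of c] by (rule integral_unique)
  also have "\<dots> \<le> \<bar>FF y - FF x\<bar>" unfolding c_def by auto
  finally have hle: "hyp_length g \<le> \<bar>FF y - FF x\<bar>" .
  have "d_S (of_real x) (of_real y) \<le> hyp_length g"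
    unfolding d_S_def
  proof (rule cINF_lower[OF _ gc])
    show "bdd_below (hyp_length ` strip_curves (of_real x) (of_real y))"
      by (rule bdd_belowI[of _ 0]) (use curve_bound in \<open>fastforce\<close>)
  qed
  then show ?thesis using hle by simp
qed


lemma ln_frac: assumes "(p::real) > 0" "q > 0" "d > 0" shows "ln (p*q/d) = ln p + ln q - ln d"
  using assms ln_div[of "p*q" d] ln_mult[of p q] by simp

theorem lemma3:
  fixes r b :: real
  assumes "0 < r" "r < 1" "-1 < b" "b < 1"
  defines "a \<equiv> tan (b * pi / 4)"
  shows "Re ` {z \<in> strip. d_S z (complex_of_real b) \<le> ln ((1 + r) / (1 - r))}
         = {4 / pi * arctan ((a - r) / (1 - a * r)) .. 4 / pi * arctan ((a + r) / (1 + a * r))}"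
proof -
  define L where "L = ln ((1 + r) / (1 - r))"
  define uM where "uM = (a + r) / (1 + a * r)"
  define um where "um = (a - r) / (1 - a * r)"
  define M where "M = 4 / pi * arctan uM"
  define m where "m = 4 / pi * arctan um"
  have a1: "-1 < a" "a < 1" unfolding a_def using tan_bnd[OF assms(3,4)] by (simp_all add: mult.commute)
  have "\<bar>a\<bar> * r \<le> \<bar>a\<bar>" using assms(2) by (intro mult_left_le) auto
  then have ar: "\<bar>a * r\<bar> < 1" using a1 assms(1) by (simp add: abs_mult)
  have p1: "1 + a * r > 0" "1 - a * r > 0" using ar by auto
  have q: "(1+a)*(1+r) > 0" "(1-a)*(1-r) > 0" "(1+a)*(1-r) > 0" "(1-a)*(1+r) > 0"
    using a1 assms(1,2) by (intro mult_pos_pos; simp)+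
  then have q': "1 + a + r + a*r > 0" "1 - a - r + a*r > 0" "1 + a - r - a*r > 0" "1 - a + r - a*r > 0"
    by (simp_all add: algebra_simps)
  have uM1: "-1 < uM" "uM < 1" unfolding uM_def using p1 q'
    by (simp_all add: less_divide_eq divide_less_eq)
  have um1: "-1 < um" "um < 1" unfolding um_def using p1 q'
    by (simp_all add: less_divide_eq divide_less_eq)
  have FFb: "FF b = ln (1 + a) - ln (1 - a)" unfolding FF_def a_def by (simp add: mult.commute)
  have L: "L = ln (1 + r) - ln (1 - r)" unfolding L_def using assms(1,2) by (simp add: ln_div)
  have e1: "1 + uM = (1 + a) * (1 + r) / (1 + a * r)" "1 - uM = (1 - a) * (1 - r) / (1 + a * r)"
    unfolding uM_def using p1 by (simp_all add: diff_divide_eq_iff add_divide_eq_iff algebra_simps)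
  have e2: "1 + um = (1 + a) * (1 - r) / (1 - a * r)" "1 - um = (1 - a) * (1 + r) / (1 - a * r)"
    unfolding um_def using p1 by (simp_all add: diff_divide_eq_iff add_divide_eq_iff algebra_simps)
  have FFM: "FF M = FF b + L" unfolding M_def FF_arct e1 FFb L
    using ln_frac[of "1+a" "1+r" "1+a*r"] ln_frac[of "1-a" "1-r" "1+a*r"] a1 assms(1,2) p1 by simp
  have FFm: "FF m = FF b - L" unfolding m_def FF_arct e2 FFb L
    using ln_frac[of "1+a" "1-r" "1-a*r"] ln_frac[of "1-a" "1+r" "1-a*r"] a1 assms(1,2) p1 by simp
  have M1: "-1 < M" "M < 1" unfolding M_def using arct_in[OF uM1] by auto
  have m1: "-1 < m" "m < 1" unfolding m_def using arct_in[OF um1] by auto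
  have bs: "complex_of_real b \<in> strip" using assms(3,4) by (simp add: strip_def)
  have "Re ` {z \<in> strip. d_S z (complex_of_real b) \<le> L} = {m..M}"
  proof
    show "Re ` {z \<in> strip. d_S z (complex_of_real b) \<le> L} \<subseteq> {m..M}"
    proof
      fix x assume "x \<in> Re ` {z \<in> strip. d_S z (complex_of_real b) \<le> L}"
      then obtain z where z: "z \<in> strip" "d_S z (complex_of_real b) \<le> L" "x = Re z" by auto
      have x1: "-1 < x" "x < 1" using z by (auto simp: strip_def)
      have "\<bar>FF b - FF x\<bar> \<le> L" using dS_lower[OF z(1) bs] z by simp
      then have "FF m \<le> FF x" "FF x \<le> FF M" using FFM FFm by auto
      then show "x \<in> {m..M}" using FF_mono_le x1 M1 m1 by auto
    qed
    show "{m..M} \<subseteq> Re ` {z \<in> strip. d_S z (complex_of_real b) \<le> L}"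
    proof
      fix x assume x: "x \<in> {m..M}"
      then have x1: "-1 < x" "x < 1" using M1 m1 by auto
      have "FF m \<le> FF x" "FF x \<le> FF M" using FF_mono_le x1 M1 m1 x by auto
      then have "\<bar>FF b - FF x\<bar> \<le> L" using FFM FFm by auto
      then have "d_S (of_real x) (of_real b) \<le> L" using dS_upper[OF x1 assms(3,4)] by simp
      moreover have "complex_of_real x \<in> strip" using x1 by (simp add: strip_def)
      ultimately show "x \<in> Re ` {z \<in> strip. d_S z (complex_of_real b) \<le> L}"
        by (intro image_eqI[of _ _ "complex_of_real x"]) auto
    qed
  qed
  then show ?thesis unfolding L_def M_def m_def uM_def um_def .
qed

end
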